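(* Fix $r\in(0,|\xi|_c)$ and let $\mathcal{S}=\{s>0:\alpha(r;s)<0\}$ (which is nonempty). For $s\in\mathcal{S}$ put $\lambda(r;s)=\sqrt{-\alpha(r;s)}>0$. Then there exists a unique $s\in\mathcal{S}$ such that $s=\lambda(r;s)$.
   Context: Fix $b,g>0$, $\rho_+>\rho_->0$, $\mu_\pm>0$, $\sigma_\pm\ge0$ (either both zero or both positive); $[\![\rho]\!]=\rho_+-\rho_-$. Let $\rho(x_3),\mu(x_3)$ equal $\rho_+,\mu_+$ on $(0,1)$ and $\rho_-,\mu_-$ on $(-b,0)$. $X=\{\psi\in H^2((-b,1)):\psi(-b)=\psi'(-b)=0\}$. For $r>0,s>0$: $E(\psi;r,s)=\frac12\int_{-b}^1s\mu(4r^2|\psi'|^2+|r^2\psi+\psi''|^2)dx_3+\frac12r^2(\sigma_+r^2+g\rho_+)|\psi(1)|^2+\frac12r^2(\sigma_-r^2-g[\![\rho]\!])|\psi(0)|^2$, $J(\psi;r)=\frac12\int_{-b}^1\rho(r^2|\psi|^2+|\psi'|^2)dx_3$, $\alpha(r;s)=\inf\{E(\psi;r,s):\psi\in X,\ J(\psi;r)=1\}$. $|\xi|_c=\sqrt{g[\![\rho]\!]/\sigma_-}$ if $\sigma_->0$, $|\xi|_c=\infty$ if $\sigma_-=0$. *)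

theory Defs
  imports "HOL-Analysis.Analysis"
begin

text \<open>Piecewise constant coefficient: value ap on (0,1), am on (-b,0)
  (the value at the single point 0 is irrelevant for integrals).\<close>
definition pw :: "real \<Rightarrow> real \<Rightarrow> real \<Rightarrow> real" where
  "pw ap am x = (if 0 < x then ap else am)"

text \<open>Membership of psi in X = {psi in H^2((-b,1)) : psi(-b) = psi'(-b) = 0},
  given together with its (weak) first and second derivatives d1, d2.
  In one dimension, psi in H^2((-b,1)) with psi(-b)=psi'(-b)=0 means exactly:
  d2 in L^2(-b,1), d1(x) = int_{-b}^x d2 and psi(x) = int_{-b}^x d1 on [-b,1].\<close>
definition inX :: "real \<Rightarrow> (real \<Rightarrow> real) \<Rightarrow> (real \<Rightarrow> real) \<Rightarrow> (real \<Rightarrow> real) \<Rightarrow> bool" where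
  "inX b psi d1 d2 \<longleftrightarrow>
     d2 absolutely_integrable_on {-b..1} \<and>
     (\<lambda>x. (d2 x)\<^sup>2) integrable_on {-b..1} \<and>
     (\<forall>x\<in>{-b..1}. d1 x = integral {-b..x} d2 \<and> psi x = integral {-b..x} d1)"

definition energyE ::
  "real \<Rightarrow> real \<Rightarrow> real \<Rightarrow> real \<Rightarrow> real \<Rightarrow> real \<Rightarrow> real \<Rightarrow> real \<Rightarrow>
   (real \<Rightarrow> real) \<Rightarrow> (real \<Rightarrow> real) \<Rightarrow> (real \<Rightarrow> real) \<Rightarrow> real \<Rightarrow> real \<Rightarrow> real" where
  "energyE b g rhop rhom mup mum sigp sigm psi d1 d2 r s =
     1/2 * integral {-b..1} (\<lambda>x. s * pw mup mum x *
        (4 * r\<^sup>2 * (d1 x)\<^sup>2 + (r\<^sup>2 * psi x + d2 x)\<^sup>2))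
     + 1/2 * r\<^sup>2 * (sigp * r\<^sup>2 + g * rhop) * (psi 1)\<^sup>2
     + 1/2 * r\<^sup>2 * (sigm * r\<^sup>2 - g * (rhop - rhom)) * (psi 0)\<^sup>2"

definition functionalJ ::
  "real \<Rightarrow> real \<Rightarrow> real \<Rightarrow> (real \<Rightarrow> real) \<Rightarrow> (real \<Rightarrow> real) \<Rightarrow> real \<Rightarrow> real" where
  "functionalJ b rhop rhom psi d1 r =
     1/2 * integral {-b..1} (\<lambda>x. pw rhop rhom x * (r\<^sup>2 * (psi x)\<^sup>2 + (d1 x)\<^sup>2))"

definition alpha ::
  "real \<Rightarrow> real \<Rightarrow> real \<Rightarrow> real \<Rightarrow> real \<Rightarrow> real \<Rightarrow> real \<Rightarrow> real \<Rightarrow> real \<Rightarrow> real \<Rightarrow> real" where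
  "alpha b g rhop rhom mup mum sigp sigm r s =
     Inf {energyE b g rhop rhom mup mum sigp sigm psi d1 d2 r s | psi d1 d2.
            inX b psi d1 d2 \<and> functionalJ b rhop rhom psi d1 r = 1}"

text \<open>r < |xi|_c, where |xi|_c = sqrt(g [rho] / sigma_-) if sigma_- > 0 and infinity otherwise.\<close>
definition below_crit :: "real \<Rightarrow> real \<Rightarrow> real \<Rightarrow> real \<Rightarrow> real \<Rightarrow> bool" where
  "below_crit g rhop rhom sigm r \<longleftrightarrow>
     (sigm > 0 \<longrightarrow> r < sqrt (g * (rhop - rhom) / sigm))"

end

theory Submission
  imports Defs
begin


lemma icmul: "integral S (\<lambda>x. c * f x) = c * integral S (f::real\<Rightarrow>real)"
  using integral_cmul[of S c f] by simp

lemma abstract_fp: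
  fixes T :: "'a set" and A B :: "'a \<Rightarrow> real" and D :: real
  assumes AB: "\<And>t. t \<in> T \<Longrightarrow> A t \<ge> 0 \<and> \<bar>B t\<bar> \<le> D"
    and t0: "t0 \<in> T" and b0: "B t0 < 0"
  defines "h \<equiv> \<lambda>s. Inf ((\<lambda>t. s * A t + B t) ` T)"
  shows "{s. s > 0 \<and> h s < 0} \<noteq> {} \<and> (\<exists>!s. s > 0 \<and> h s < 0 \<and> s = sqrt (- h s))"
proof -
  have ne: "\<And>s::real. (\<lambda>t. s * A t + B t) ` T \<noteq> {}" using t0 by auto
  have lb: "\<And>(s::real) t. s \<ge> 0 \<Longrightarrow> t \<in> T \<Longrightarrow> -D \<le> s * A t + B t"
  proof -
    fix s :: real and t assume "s \<ge> 0" "t \<in> T"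
    then have "s * A t \<ge> 0" "B t \<ge> -D" using AB[of t] by auto
    then show "-D \<le> s * A t + B t" by linarith
  qed
  have bdd: "\<And>s::real. s \<ge> 0 \<Longrightarrow> bdd_below ((\<lambda>t. s * A t + B t) ` T)"
    using lb by (auto intro!: bdd_belowI)
  have hle: "\<And>(s::real) t. s \<ge> 0 \<Longrightarrow> t \<in> T \<Longrightarrow> h s \<le> s * A t + B t"
    unfolding h_def using bdd by (auto intro!: cInf_lower)
  have hge: "\<And>s::real. s \<ge> 0 \<Longrightarrow> -D \<le> h s"
    unfolding h_def using lb ne by (auto intro!: cInf_greatest)
  have mono: "\<And>s1 s2. 0 \<le> s1 \<Longrightarrow> s1 \<le> s2 \<Longrightarrow> h s1 \<le> h s2"
  proof -
    fix s1 s2 :: real assume a: "0 \<le> s1" "s1 \<le> s2"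
    show "h s1 \<le> h s2" unfolding h_def
    proof (rule cInf_greatest[OF ne])
      fix y assume "y \<in> (\<lambda>t. s2 * A t + B t) ` T"
      then obtain t where t: "t \<in> T" "y = s2 * A t + B t" by auto
      have "s1 * A t \<le> s2 * A t" using a AB[OF t(1)] by (simp add: mult_right_mono)
      then show "Inf ((\<lambda>t. s1 * A t + B t) ` T) \<le> y"
        using hle[OF a(1) t(1)] t unfolding h_def by linarith
    qed
  qed
  have up: "\<And>s1 s2. 0 < s1 \<Longrightarrow> s1 \<le> s2 \<Longrightarrow> h s2 \<le> (s2/s1) * h s1 + (s2/s1 - 1) * D"
  proof -
    fix s1 s2 :: real assume a: "0 < s1" "s1 \<le> s2"
    define k where "k = s2/s1"
    have k: "k \<ge> 1" using a unfolding k_def by simp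
    have "(h s2 - (k - 1) * D) / k \<le> h s1" unfolding h_def
    proof (rule cInf_greatest[OF ne])
      fix y assume "y \<in> (\<lambda>t. s1 * A t + B t) ` T"
      then obtain t where t: "t \<in> T" "y = s1 * A t + B t" by auto
      have e: "s2 * A t + B t = k * (s1 * A t + B t) - (k - 1) * B t"
        using a unfolding k_def by (simp add: field_simps)
      have "- ((k - 1) * B t) \<le> (k - 1) * D"
      proof -
        have "(k - 1) * (- B t) \<le> (k - 1) * D"
          using k AB[OF t(1)] by (intro mult_left_mono) auto
        then show ?thesis by simp
      qed
      then have "h s2 \<le> k * y + (k - 1) * D"
        using hle[of s2 t] a t e by auto
      then have "h s2 - (k - 1) * D \<le> y * k" by (simp add: mult.commute)
      then have "(h s2 - (k - 1) * D) / k \<le> y" using k by (simp add: pos_divide_le_eq)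
      then show "(Inf ((\<lambda>t. s2 * A t + B t) ` T) - (k - 1) * D) / k \<le> y"
        unfolding h_def by simp
    qed
    then have "h s2 - (k - 1) * D \<le> h s1 * k" using k by (simp add: pos_divide_le_eq)
    then show "h s2 \<le> (s2/s1) * h s1 + (s2/s1 - 1) * D" unfolding k_def[symmetric] by (simp add: mult.commute)
  qed
  define f where "f s = s\<^sup>2 + h s" for s
  define lo where "lo = min 1 (- B t0 / (2 * (1 + A t0)))"
  define hi where "hi = D + 1 + lo"
  have A0: "A t0 \<ge> 0" and D0: "D \<ge> 0" using AB[OF t0] by auto
  have "- B t0 / (2 * (1 + A t0)) > 0" using b0 A0 by (intro divide_pos_pos) auto
  then have lo0: "lo > 0" unfolding lo_def by auto
  have lo1: "lo \<le> 1" unfolding lo_def by auto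
  have "lo * (1 + A t0) \<le> - B t0 / 2"
  proof -
    have "lo \<le> - B t0 / (2 * (1 + A t0))" unfolding lo_def by auto
    then have "lo * (1 + A t0) \<le> (- B t0 / (2 * (1 + A t0))) * (1 + A t0)"
      using A0 by (intro mult_right_mono) auto
    also have "\<dots> = - B t0 / 2" using A0 by (simp add: field_simps)
    finally show ?thesis .
  qed
  moreover have "lo\<^sup>2 \<le> lo" using lo0 lo1 by (simp add: power2_eq_square mult_le_cancel_left1)
  ultimately have flo: "f lo < 0" unfolding f_def using hle[of lo t0] t0 lo0 b0
    by (simp add: algebra_simps) 
  have hi1: "hi \<ge> 1" "hi > lo" "hi > D" using D0 lo0 unfolding hi_def by auto
  have "hi\<^sup>2 \<ge> hi" using hi1 by (simp add: power2_eq_square)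
  then have fhi: "f hi > 0" unfolding f_def using hge[of hi] hi1 lo0 by auto
  define M where "M = hi * A t0 + B t0 + D"
  have lip: "\<And>x y. x \<in> {lo..hi} \<Longrightarrow> y \<in> {lo..hi} \<Longrightarrow> \<bar>h x - h y\<bar> \<le> (M / lo) * \<bar>x - y\<bar>"
  proof -
    have one: "h y - h x \<le> (M / lo) * (y - x)" if "x \<in> {lo..hi}" "y \<in> {lo..hi}" "x \<le> y" for x y
    proof -
      have x0: "x > 0" using that lo0 by auto
      have "h y - h x \<le> (y/x - 1) * (h x + D)" using up[OF x0 that(3)]
        by (simp add: algebra_simps)
      also have "\<dots> = (y - x) * ((h x + D) / x)" using x0 by (simp add: field_simps)
      also have "\<dots> \<le> (y - x) * (M / lo)"
      proof (rule mult_left_mono)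
        have "h x \<le> h hi" using mono[of x hi] that x0 by auto
        also have "\<dots> \<le> hi * A t0 + B t0" using hle[of hi t0] t0 hi1 lo0 by auto
        finally have hM: "h x + D \<le> M" unfolding M_def by simp
        have hD: "0 \<le> h x + D" using hge[of x] x0 by simp
        have "(h x + D) / x \<le> (h x + D) / lo" using hD x0 that(1) lo0
          by (intro divide_left_mono) auto
        also have "\<dots> \<le> M / lo" using hM lo0 by (intro divide_right_mono) auto
        finally show "(h x + D) / x \<le> M / lo" .
      qed (use that in auto)
      finally show ?thesis by (simp add: mult.commute)
    qed
    have mx: "h x \<le> h y" if "x \<in> {lo..hi}" "x \<le> y" for x y using mono[of x y] that lo0 by auto
    fix x y assume "x \<in> {lo..hi}" "y \<in> {lo..hi}"
    then show "\<bar>h x - h y\<bar> \<le> (M / lo) * \<bar>x - y\<bar>"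
      using one[of x y] one[of y x] mx[of x y] mx[of y x]
      by (cases "x \<le> y") (auto simp: abs_if)
  qed
  have M0: "M / lo \<ge> 0"
  proof -
    have "-D \<le> hi * A t0 + B t0" using lb[of hi t0] hi1 lo0 t0 by auto
    then show ?thesis unfolding M_def using lo0 by auto
  qed
  have conth: "continuous_on {lo..hi} h"
  proof (rule lipschitz_on_continuous_on)
    show "lipschitz_on (M/lo) {lo..hi} h"
      using lip M0 by (intro lipschitz_onI) (auto simp: dist_real_def)
  qed
  have contf: "continuous_on {lo..hi} f" unfolding f_def
    by (intro continuous_intros conth)
  obtain s where s: "s \<in> {lo..hi}" "f s = 0"
    using IVT'[of f lo 0 hi] flo fhi hi1 contf by auto
  have s0: "s > 0" using s lo0 by auto
  have hs: "h s = - s\<^sup>2" using s unfolding f_def by simp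
  have P: "s > 0 \<and> h s < 0 \<and> s = sqrt (- h s)" using s0 hs by simp
  have uniq: "y = s" if "y > 0 \<and> h y < 0 \<and> y = sqrt (- h y)" for y
  proof -
    have "y\<^sup>2 = - h y" using that by (metis abs_of_pos less_eq_real_def neg_0_less_iff_less real_sqrt_pow2)
    then have fy: "f y = 0" unfolding f_def by simp
    show ?thesis
    proof (rule ccontr)
      assume "y \<noteq> s"
      then consider "y < s" | "s < y" by linarith
      then show False
      proof cases
        case 1
        then have "y\<^sup>2 < s\<^sup>2" using that by (simp add: power_strict_mono)
        moreover have "h y \<le> h s" using mono[of y s] 1 that by auto
        ultimately show False using fy s unfolding f_def by linarith
      next
        case 2
        then have "s\<^sup>2 < y\<^sup>2" using s0 by (simp add: power_strict_mono)
        moreover have "h s \<le> h y" using mono[of s y] 2 s0 by auto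
        ultimately show False using fy s unfolding f_def by linarith
      qed
    qed
  qed
  show ?thesis using P uniq by blast
qed




lemma cs_ineq:
  fixes f :: "real \<Rightarrow> real"
  assumes c: "continuous_on {a..x} f" and ax: "a \<le> x"
  shows "(integral {a..x} f)\<^sup>2 \<le> (x - a) * integral {a..x} (\<lambda>y. (f y)\<^sup>2)"
proof (cases "a = x")
  case True then show ?thesis by simp
next
  case False
  then have L: "x - a > 0" using ax by simp
  define I1 where "I1 = integral {a..x} f"
  define I2 where "I2 = integral {a..x} (\<lambda>y. (f y)\<^sup>2)"
  define k where "k = I1 / (x - a)"
  have h1: "(f has_integral I1) {a..x}" unfolding I1_def
    using c by (intro integrable_integral integrable_continuous_real)
  have c2: "continuous_on {a..x} (\<lambda>y. (f y)\<^sup>2)" using c by (intro continuous_intros)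
  have h2: "((\<lambda>y. (f y)\<^sup>2) has_integral I2) {a..x}" unfolding I2_def
    using c2 by (intro integrable_integral integrable_continuous_real)
  have h3: "((\<lambda>y. k\<^sup>2) has_integral (x - a) * k\<^sup>2) {a..x}"
    using has_integral_const_real[of "k\<^sup>2" a x] ax by simp
  have h4: "((\<lambda>y. (2*k) * f y) has_integral (2*k) * I1) {a..x}"
    using has_integral_mult_right[OF h1] by simp
  have "((\<lambda>y. ((f y)\<^sup>2 - (2*k) * f y) + k\<^sup>2) has_integral (I2 - (2*k)*I1) + (x - a) * k\<^sup>2) {a..x}"
    by (intro has_integral_add has_integral_diff h2 h3 h4)
  moreover have "\<And>y. ((f y)\<^sup>2 - (2*k) * f y) + k\<^sup>2 = (f y - k)\<^sup>2" by (simp add: power2_eq_square algebra_simps)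
  ultimately have "((\<lambda>y. (f y - k)\<^sup>2) has_integral (I2 - (2*k)*I1) + (x - a) * k\<^sup>2) {a..x}" by simp
  then have "0 \<le> (I2 - (2*k)*I1) + (x - a) * k\<^sup>2" by (rule has_integral_nonneg) simp
  moreover have e: "(x - a) * k = I1" unfolding k_def using L by simp
  moreover have "(x - a) * k\<^sup>2 = I1 * k" using e by (metis mult.assoc power2_eq_square)
  ultimately have "0 \<le> I2 - k * I1" by (simp add: algebra_simps)
  then have "0 \<le> (x - a) * (I2 - k * I1)" using L by simp
  also have "(x - a) * (I2 - k * I1) = (x - a) * I2 - I1 * I1" using e by (simp add: algebra_simps)
  finally have "I1\<^sup>2 \<le> I2 * (x - a)" by (simp add: power2_eq_square algebra_simps)
  then show ?thesis unfolding I1_def I2_def by (simp add: mult.commute)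
qed

lemma inX_cont:
  assumes "inX b psi d1 d2" "b > 0"
  shows "continuous_on {-b..1} d1" "continuous_on {-b..1} psi"
proof -
  have d2i: "d2 integrable_on {-b..1}" using assms(1) unfolding inX_def absolutely_integrable_on_def by auto
  have "continuous_on {-b..1} (\<lambda>x. integral {-b..x} d2)" by (rule indefinite_integral_continuous_1[OF d2i])
  then show c1: "continuous_on {-b..1} d1" using assms(1) unfolding inX_def
    by (metis (no_types, lifting) continuous_on_cong)
  have "continuous_on {-b..1} (\<lambda>x. integral {-b..x} d1)"
    by (rule indefinite_integral_continuous_1[OF integrable_continuous_real[OF c1]])
  then show "continuous_on {-b..1} psi" using assms(1) unfolding inX_def
    by (metis (no_types, lifting) continuous_on_cong)
qed

lemma psi_bound:
  assumes X: "inX b psi d1 d2" and b: "b > 0" and x: "x \<in> {-b..1}"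
  shows "(psi x)\<^sup>2 \<le> (1 + b) * integral {-b..1} (\<lambda>y. (d1 y)\<^sup>2)"
proof -
  have c1: "continuous_on {-b..1} d1" using inX_cont[OF X b] by simp
  have px: "psi x = integral {-b..x} d1" using X x unfolding inX_def by auto
  have sub: "{-b..x} \<subseteq> {-b..1}" using x by auto
  have cx: "continuous_on {-b..x} d1" using continuous_on_subset[OF c1 sub] .
  have "(psi x)\<^sup>2 \<le> (x - - b) * integral {-b..x} (\<lambda>y. (d1 y)\<^sup>2)"
    unfolding px using cs_ineq[OF cx] x by auto
  also have "\<dots> \<le> (1 + b) * integral {-b..1} (\<lambda>y. (d1 y)\<^sup>2)"
  proof (rule mult_mono)
    show "x - - b \<le> 1 + b" using x by auto
    show "integral {-b..x} (\<lambda>y. (d1 y)\<^sup>2) \<le> integral {-b..1} (\<lambda>y. (d1 y)\<^sup>2)"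
      using sub c1 cx by (intro integral_subset_le integrable_continuous_real continuous_intros) auto
    show "0 \<le> 1 + b" using b by simp
    show "0 \<le> integral {-b..x} (\<lambda>y. (d1 y)\<^sup>2)"
      using cx by (intro integral_nonneg integrable_continuous_real continuous_intros) auto
  qed
  finally show ?thesis .
qed

lemma d1_bound:
  assumes X: "inX b psi d1 d2" and b: "b > 0" and rm: "rhom > 0" "rhom \<le> rhop"
    and J: "functionalJ b rhop rhom psi d1 r = 1"
  shows "integral {-b..1} (\<lambda>y. (d1 y)\<^sup>2) \<le> 2 / rhom"
proof -
  let ?F = "\<lambda>x. pw rhop rhom x * (r\<^sup>2 * (psi x)\<^sup>2 + (d1 x)\<^sup>2)"
  have FI: "integral {-b..1} ?F = 2" using J unfolding functionalJ_def by simp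
  then have Fi: "?F integrable_on {-b..1}" using not_integrable_integral by fastforce
  have c1: "continuous_on {-b..1} d1" using inX_cont[OF X b] by simp
  have "integral {-b..1} (\<lambda>x. rhom * (d1 x)\<^sup>2) \<le> integral {-b..1} ?F"
  proof (rule integral_le)
    show "(\<lambda>x. rhom * (d1 x)\<^sup>2) integrable_on {-b..1}"
      using c1 by (intro integrable_continuous_real continuous_intros)
    show "?F integrable_on {-b..1}" by (rule Fi)
    fix x
    have "pw rhop rhom x \<ge> rhom" using rm unfolding pw_def by auto
    moreover have "(d1 x)\<^sup>2 \<le> r\<^sup>2 * (psi x)\<^sup>2 + (d1 x)\<^sup>2" by simp
    ultimately show "rhom * (d1 x)\<^sup>2 \<le> ?F x" using rm
      by (intro mult_mono) auto
  qed
  then have "rhom * integral {-b..1} (\<lambda>x. (d1 x)\<^sup>2) \<le> 2" using FI by (simp add: icmul)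
  then show ?thesis using rm by (simp add: pos_le_divide_eq mult.commute)
qed

lemma pw_int:
  fixes G :: "real \<Rightarrow> real"
  assumes c: "continuous_on {-b..1} G" and b: "b > 0"
  shows "(\<lambda>x. pw a e x * G x) integrable_on {-b..1}"
proof -
  have c0: "continuous_on {-b..0} G" using continuous_on_subset[OF c] by auto
  have "(\<lambda>x. e * G x) integrable_on {-b..0}" using c0 by (intro integrable_continuous_real continuous_intros)
  then have i1: "(\<lambda>x. pw a e x * G x) integrable_on {-b..0}"
    by (rule integrable_spike_finite[where S="{}", rotated 2]) (auto simp: pw_def)
  have c1: "continuous_on {0..1} G" using continuous_on_subset[OF c] b by auto
  have "(\<lambda>x. a * G x) integrable_on {0..1}" using c1 by (intro integrable_continuous_real continuous_intros)
  then have i2: "(\<lambda>x. pw a e x * G x) integrable_on {0..1}"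
    by (rule integrable_spike_finite[where S="{0}", rotated 2]) (auto simp: pw_def)
  show ?thesis by (rule Henstock_Kurzweil_Integration.integrable_combine[OF _ _ i1 i2]) (use b in auto)
qed




lemma example:
  fixes b r rhop rhom :: real
  assumes b: "b > 0" and r: "r > 0" and rm: "rhom > 0" "rhom \<le> rhop"
  shows "\<exists>psi d1 d2. inX b psi d1 d2 \<and> functionalJ b rhop rhom psi d1 r = 1 \<and> psi 1 = 0 \<and> psi 0 \<noteq> 0"
proof -
  define p where "p x = (x+b)^2*(1-x)" for x :: real
  define q where "q x = 2*(x+b)*(1-x) - (x+b)^2" for x :: real
  define w where "w x = 2 - 6*x - 4*b" for x :: real
  have dq: "(q has_real_derivative w y) (at y)" for y
    unfolding q_def w_def
    by (auto intro!: derivative_eq_intros simp: algebra_simps)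
  have dp: "(p has_real_derivative q y) (at y)" for y
    unfolding q_def p_def
    by (auto intro!: derivative_eq_intros simp: algebra_simps power2_eq_square)
  have Iw: "integral {-b..x} w = q x" if "x \<in> {-b..1}" for x
  proof -
    have "(w has_integral q x - q (-b)) {-b..x}"
      using that dq
      by (intro fundamental_theorem_of_calculus)
         (auto simp: has_real_derivative_iff_has_vector_derivative[symmetric] intro: has_field_derivative_at_within)
    then show ?thesis by (simp add: integral_unique q_def)
  qed
  have Iq: "integral {-b..x} q = p x" if "x \<in> {-b..1}" for x
  proof -
    have "(q has_integral p x - p (-b)) {-b..x}"
      using that dp
      by (intro fundamental_theorem_of_calculus)
         (auto simp: has_real_derivative_iff_has_vector_derivative[symmetric] intro: has_field_derivative_at_within)
    then show ?thesis by (simp add: integral_unique p_def)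
  qed
  have cp: "continuous_on {-b..1} p" unfolding p_def by (intro continuous_intros)
  have cq: "continuous_on {-b..1} q" unfolding q_def by (intro continuous_intros)
  have cw: "continuous_on {-b..1} w" unfolding w_def by (intro continuous_intros)
  define G where "G x = r\<^sup>2 * (p x)\<^sup>2 + (q x)\<^sup>2" for x
  have cG: "continuous_on {-b..1} G" unfolding G_def using cp cq by (intro continuous_intros)
  define F0 where "F0 x = pw rhop rhom x * G x" for x
  have F0i: "F0 integrable_on {-b..1}" unfolding F0_def by (rule pw_int[OF cG b])
  have G0: "G x \<ge> 0" for x unfolding G_def by simp
  have Gpos: "integral {-b..1} G > 0"
  proof -
    have "integral {-b..1} G \<ge> 0" using cG G0 by (intro integral_nonneg integrable_continuous_real) auto
    moreover have "integral {-b..1} G \<noteq> 0"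
    proof
      assume "integral {-b..1} G = 0"
      then have "\<forall>x\<in>{-b..1}. G x = 0"
        using integral_cbox_eq_0_iff[of "-b" 1 G] cG G0 b by auto
      then have "G 0 = 0" using b by auto
      moreover have "G 0 > 0"
      proof -
        have "r\<^sup>2 * (p 0)\<^sup>2 > 0" unfolding p_def using b r by simp
        then show ?thesis unfolding G_def by (smt (verit) zero_le_power2)
      qed
      ultimately show False by simp
    qed
    ultimately show ?thesis by simp
  qed
  define J1 where "J1 = 1/2 * integral {-b..1} F0"
  have "rhom * integral {-b..1} G \<le> integral {-b..1} F0"
  proof -
    have "integral {-b..1} (\<lambda>x. rhom * G x) \<le> integral {-b..1} F0"
    proof (rule integral_le)
      show "(\<lambda>x. rhom * G x) integrable_on {-b..1}" using cG by (intro integrable_continuous_real continuous_intros)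
      show "F0 integrable_on {-b..1}" by (rule F0i)
      fix x have "pw rhop rhom x \<ge> rhom" using rm unfolding pw_def by auto
      then show "rhom * G x \<le> F0 x" unfolding F0_def using G0[of x] by (simp add: mult_right_mono)
    qed
    then show ?thesis by (simp add: icmul)
  qed
  moreover have "rhom * integral {-b..1} G > 0" using Gpos rm by simp
  ultimately have J1pos: "J1 > 0" unfolding J1_def by linarith
  define c where "c = 1 / sqrt J1"
  have c0: "c > 0" unfolding c_def using J1pos by simp
  have c2: "c\<^sup>2 * J1 = 1" unfolding c_def using J1pos by (simp add: power_divide)
  define psi where "psi x = c * p x" for x
  define d1 where "d1 x = c * q x" for x
  define d2 where "d2 x = c * w x" for x
  have X: "inX b psi d1 d2" unfolding inX_def
  proof (intro conjI ballI)
    show "d2 absolutely_integrable_on {-b..1}" unfolding d2_def using cw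
      by (intro absolutely_integrable_continuous_real continuous_intros)
    show "(\<lambda>x. (d2 x)\<^sup>2) integrable_on {-b..1}" unfolding d2_def using cw
      by (intro integrable_continuous_real continuous_intros)
    fix x assume x: "x \<in> {-b..1}"
    show "d1 x = integral {-b..x} d2" unfolding d1_def d2_def using Iw[OF x] by (simp add: icmul)
    show "psi x = integral {-b..x} d1" unfolding psi_def d1_def using Iq[OF x] by (simp add: icmul)
  qed
  have "functionalJ b rhop rhom psi d1 r = 1/2 * integral {-b..1} (\<lambda>x. c\<^sup>2 * F0 x)"
    unfolding functionalJ_def psi_def d1_def F0_def G_def
    by (simp add: power_mult_distrib algebra_simps)
  also have "\<dots> = c\<^sup>2 * J1" unfolding J1_def by (simp add: icmul)
  finally have J: "functionalJ b rhop rhom psi d1 r = 1" using c2 by simp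
  have "psi 1 = 0" unfolding psi_def p_def by simp
  moreover have "psi 0 \<noteq> 0" unfolding psi_def p_def using c0 b by simp
  ultimately show ?thesis using X J by blast
qed




lemma A_nonneg:
  assumes "\<And>x. 0 \<le> (f::real\<Rightarrow>real) x"
  shows "0 \<le> integral S f"
proof (cases "f integrable_on S")
  case True then show ?thesis using assms by (intro integral_nonneg) auto
next
  case False then show ?thesis by (simp add: not_integrable_integral)
qed

theorem lemma2p2:
  fixes b g rhop rhom mup mum sigp sigm r :: real
  assumes "b > 0" and "g > 0"
    and "rhop > rhom" and "rhom > 0"
    and "mup > 0" and "mum > 0"
    and "(sigp = 0 \<and> sigm = 0) \<or> (sigp > 0 \<and> sigm > 0)"
    and "r > 0" and "below_crit g rhop rhom sigm r"
  shows "{s. s > 0 \<and> alpha b g rhop rhom mup mum sigp sigm r s < 0} \<noteq> {} \<and>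
         (\<exists>!s. s > 0 \<and> alpha b g rhop rhom mup mum sigp sigm r s < 0 \<and>
               s = sqrt (- alpha b g rhop rhom mup mum sigp sigm r s))"
proof -
  note b = assms(1) and g = assms(2) and rp = assms(3) and rm = assms(4)
  have rm': "rhom \<le> rhop" using rp by simp
  define k1 where "k1 = sigp * r\<^sup>2 + g * rhop"
  define k2 where "k2 = sigm * r\<^sup>2 - g * (rhop - rhom)"
  have k2: "k2 < 0"
  proof (cases "sigm > 0")
    case True
    then have "r < sqrt (g * (rhop - rhom) / sigm)" using assms(9) unfolding below_crit_def by auto
    then have "r\<^sup>2 < (sqrt (g * (rhop - rhom) / sigm))\<^sup>2" using assms(8) by (intro power_strict_mono) auto
    also have "\<dots> = g * (rhop - rhom) / sigm" using g rp True by simp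
    finally have "sigm * r\<^sup>2 < g * (rhop - rhom)" using True by (simp add: less_divide_eq mult.commute)
    then show ?thesis unfolding k2_def by simp
  next
    case False
    then have "sigm = 0" using assms(7) by auto
    then show ?thesis unfolding k2_def using g rp by simp
  qed
  define A where "A = (\<lambda>(psi::real\<Rightarrow>real, d1::real\<Rightarrow>real, d2::real\<Rightarrow>real).
     1/2 * integral {-b..1} (\<lambda>x. pw mup mum x * (4 * r\<^sup>2 * (d1 x)\<^sup>2 + (r\<^sup>2 * psi x + d2 x)\<^sup>2)))"
  define B where "B = (\<lambda>(psi::real\<Rightarrow>real, d1::real\<Rightarrow>real, d2::real\<Rightarrow>real).
     1/2 * r\<^sup>2 * k1 * (psi 1)\<^sup>2 + 1/2 * r\<^sup>2 * k2 * (psi 0)\<^sup>2)"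
  define T where "T = {(psi, d1, d2). inX b psi d1 d2 \<and> functionalJ b rhop rhom psi d1 r = 1}"
  have Eeq: "energyE b g rhop rhom mup mum sigp sigm psi d1 d2 r s = s * A (psi, d1, d2) + B (psi, d1, d2)"
    for psi d1 d2 s
  proof -
    have "integral {-b..1} (\<lambda>x. s * pw mup mum x * (4 * r\<^sup>2 * (d1 x)\<^sup>2 + (r\<^sup>2 * psi x + d2 x)\<^sup>2))
       = s * integral {-b..1} (\<lambda>x. pw mup mum x * (4 * r\<^sup>2 * (d1 x)\<^sup>2 + (r\<^sup>2 * psi x + d2 x)\<^sup>2))"
      by (simp only: mult.assoc icmul)
    then show ?thesis unfolding energyE_def A_def B_def k1_def k2_def
      by (simp add: algebra_simps)
  qed
  have aeq: "alpha b g rhop rhom mup mum sigp sigm r s = Inf ((\<lambda>t. s * A t + B t) ` T)" for s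
  proof -
    have "{energyE b g rhop rhom mup mum sigp sigm psi d1 d2 r s | psi d1 d2.
            inX b psi d1 d2 \<and> functionalJ b rhop rhom psi d1 r = 1} = (\<lambda>t. s * A t + B t) ` T"
      unfolding Eeq T_def by (auto simp: image_def)
    then show ?thesis unfolding alpha_def by simp
  qed
  define K where "K = (1 + b) * (2 / rhom)"
  define D where "D = 1/2 * r\<^sup>2 * (\<bar>k1\<bar> + \<bar>k2\<bar>) * K"
  have AB: "A t \<ge> 0 \<and> \<bar>B t\<bar> \<le> D" if tT: "t \<in> T" for t
  proof -
    obtain psi d1 d2 where t: "t = (psi, d1, d2)" and X: "inX b psi d1 d2"
      and J: "functionalJ b rhop rhom psi d1 r = 1" using tT unfolding T_def by (cases t) auto
    have "A t \<ge> 0" unfolding t A_def using assms(5,6)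
      by (auto intro!: A_nonneg mult_nonneg_nonneg simp: pw_def)
    moreover have "\<bar>B t\<bar> \<le> D"
    proof -
      have I: "integral {-b..1} (\<lambda>y. (d1 y)\<^sup>2) \<le> 2 / rhom" by (rule d1_bound[OF X b rm rm' J])
      have bnd: "(psi x)\<^sup>2 \<le> K" if "x \<in> {-b..1}" for x
      proof -
        have "(psi x)\<^sup>2 \<le> (1 + b) * integral {-b..1} (\<lambda>y. (d1 y)\<^sup>2)" by (rule psi_bound[OF X b that])
        also have "\<dots> \<le> K" unfolding K_def using I b by (intro mult_left_mono) auto
        finally show ?thesis .
      qed
      have p1: "(psi 1)\<^sup>2 \<le> K" using bnd b by auto
      have p0: "(psi 0)\<^sup>2 \<le> K" using bnd b by auto
      have r2: "0 \<le> 1/2 * r\<^sup>2" by simp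
      have "\<bar>B t\<bar> \<le> \<bar>1/2 * r\<^sup>2 * k1 * (psi 1)\<^sup>2\<bar> + \<bar>1/2 * r\<^sup>2 * k2 * (psi 0)\<^sup>2\<bar>"
        unfolding t B_def by simp
      also have "\<dots> = (1/2 * r\<^sup>2) * (\<bar>k1\<bar> * (psi 1)\<^sup>2) + (1/2 * r\<^sup>2) * (\<bar>k2\<bar> * (psi 0)\<^sup>2)"
        by (simp add: abs_mult)
      also have "\<dots> \<le> (1/2 * r\<^sup>2) * (\<bar>k1\<bar> * K) + (1/2 * r\<^sup>2) * (\<bar>k2\<bar> * K)"
        using p1 p0 r2 by (intro add_mono mult_left_mono) auto
      also have "\<dots> = D" unfolding D_def by (simp add: algebra_simps)
      finally show ?thesis .
    qed
    ultimately show ?thesis by simp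
  qed
  obtain psi0 d10 d20 where X0: "inX b psi0 d10 d20" and J0: "functionalJ b rhop rhom psi0 d10 r = 1"
    and p1: "psi0 1 = 0" and p0: "psi0 0 \<noteq> 0"
    using example[OF b assms(8) rm rm'] by blast
  have t0: "(psi0, d10, d20) \<in> T" unfolding T_def using X0 J0 by simp
  have "B (psi0, d10, d20) = 1/2 * r\<^sup>2 * k2 * (psi0 0)\<^sup>2" unfolding B_def using p1 by simp
  also have "\<dots> < 0"
  proof -
    have "1/2 * r\<^sup>2 * (psi0 0)\<^sup>2 > 0" using p0 assms(8) by simp
    then have "(1/2 * r\<^sup>2 * (psi0 0)\<^sup>2) * k2 < 0" using k2 by (simp add: mult_pos_neg)
    then show ?thesis by (simp add: algebra_simps)
  qed
  finally have b0: "B (psi0, d10, d20) < 0" .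
  have main: "{s. s > 0 \<and> Inf ((\<lambda>t. s * A t + B t) ` T) < 0} \<noteq> {} \<and>
      (\<exists>!s. s > 0 \<and> Inf ((\<lambda>t. s * A t + B t) ` T) < 0 \<and> s = sqrt (- Inf ((\<lambda>t. s * A t + B t) ` T)))"
    using abstract_fp[of T A B D, OF AB t0 b0] by simp
  show ?thesis unfolding aeq using main .
qed


end
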